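(* Let $r\ge 0$ be a fixed integer. There is a constant $C>0$ (depending only on $r$) such that every $r$-cross-free hypergraph $H$ on $n$ vertices has at most $C n^{r+1}$ hyperedges (i.e. $\mathcal O(n^{r+1})$ hyperedges).
   Context: Hypergraphs have vertex set $V=[n]$ and are identified with their sets of hyperedges; $\overline A = V\setminus A$. $\mathcal K_r(n)$ is the class of hypergraphs $\mathcal E$ on $V$ satisfying: (R0) every $X\subseteq V$ with $|X|\le r$ is in $\mathcal E$; (R1) $A\in\mathcal E\Rightarrow V\setminus A\in\mathcal E$; (R2) $A,B\in\mathcal E$ and $|A\cap B|\ge r\Rightarrow A\cup B\in\mathcal E$. $\mathcal K^0_r(n)$ is the class of hypergraphs satisfying (R0) and (R1) only. For a hypergraph $H$ on $V$, $\mathrm{cl}_r(H)$ (resp. $\mathrm{cl}^0_r(H)$) is the intersection of all hypergraphs in $\mathcal K_r(n)$ (resp. $\mathcal K^0_r(n)$) containing $H$. Two sets $A,B\subseteq V$ are $r$-orthogonal if $\mathrm{cl}_r(\{A,B\})=\mathrm{cl}^0_r(\{A,B\})$, where $\{A,B\}$ is the hypergraph on $V$ with hyperedges $A$ and $B$. A hypergraph is $r$-cross-free if every pair of its hyperedges is $r$-orthogonal. *)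

theory Defs
  imports Complex_Main
begin

definition vset :: "nat \<Rightarrow> nat set" where
  "vset n = {1..n}"

definition K0 :: "nat \<Rightarrow> nat \<Rightarrow> nat set set set" where
  "K0 r n = {E. E \<subseteq> Pow (vset n)
      \<and> (\<forall>X. X \<subseteq> vset n \<and> card X \<le> r \<longrightarrow> X \<in> E)
      \<and> (\<forall>A\<in>E. vset n - A \<in> E)}"

definition K :: "nat \<Rightarrow> nat \<Rightarrow> nat set set set" where
  "K r n = {E. E \<in> K0 r n
      \<and> (\<forall>A\<in>E. \<forall>B\<in>E. card (A \<inter> B) \<ge> r \<longrightarrow> A \<union> B \<in> E)}"

definition cl :: "nat \<Rightarrow> nat \<Rightarrow> nat set set \<Rightarrow> nat set set" where
  "cl r n H = \<Inter> {E \<in> K r n. H \<subseteq> E}"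

definition cl0 :: "nat \<Rightarrow> nat \<Rightarrow> nat set set \<Rightarrow> nat set set" where
  "cl0 r n H = \<Inter> {E \<in> K0 r n. H \<subseteq> E}"

definition r_orthogonal :: "nat \<Rightarrow> nat \<Rightarrow> nat set \<Rightarrow> nat set \<Rightarrow> bool" where
  "r_orthogonal r n A B \<longleftrightarrow> cl r n {A, B} = cl0 r n {A, B}"

definition r_cross_free :: "nat \<Rightarrow> nat \<Rightarrow> nat set set \<Rightarrow> bool" where
  "r_cross_free r n H \<longleftrightarrow> (\<forall>A\<in>H. \<forall>B\<in>H. r_orthogonal r n A B)"

end

theory Submission
  imports Defs
begin

lemma pow_step:
  fixes m k :: nat assumes "k \<ge> 1" shows "m^k + m^(k-1) \<le> (Suc m)^k"
proof -
  obtain j where k: "k = Suc j" using assms by (cases k) auto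
  have "m^j \<le> (Suc m)^j" by (simp add: power_mono)
  moreover have "m * m^j \<le> m * (Suc m)^j" using \<open>m^j \<le> (Suc m)^j\<close> by simp
  ultimately have "m^j + m*m^j \<le> Suc m^j + m*Suc m^j" by linarith
  moreover have "(Suc m)^k = Suc m^j + m*Suc m^j" "m^k + m^(k-1) = m^j + m*m^j" using k by simp_all
  ultimately show ?thesis by linarith
qed

lemma subsets_card_le:
  assumes "finite F" shows "card {S. S \<subseteq> F \<and> card S = j} \<le> card F ^ j"
proof (cases "j \<le> card F")
  case True
  then show ?thesis using n_subsets[OF assms] binomial_le_pow by metis
next
  case False
  then show ?thesis using n_subsets[OF assms] by (simp add: binomial_eq_0)
qed

lemma klam:
  fixes U :: "'a set" and k :: nat
  assumes "finite U" "k \<ge> 1" "L \<subseteq> Pow U" "\<forall>P\<in>L. k \<le> card P"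
    "\<forall>P\<in>L. \<forall>Q\<in>L. k \<le> card (P \<inter> Q) \<longrightarrow> P \<subseteq> Q \<or> Q \<subseteq> P"
  shows "card L \<le> 2 * card U ^ k"
  using assms(1,3,4,5)
proof (induction U arbitrary: L rule: finite_induct)
  case empty
  then have "L \<subseteq> {{}}" by auto
  with empty.prems(2) assms(2) have "L = {}" by force
  thus ?case by simp
next
  case (insert x F)
  let ?m = "card F"
  have finL: "finite L" using insert.prems(1) insert.hyps(1)
    by (meson finite_Pow_iff finite_insert finite_subset)
  have finP: "finite P" if "P \<in> L" for P
    using that insert.prems(1) insert.hyps(1) finite_subset by blast
  define L1 where "L1 = {P\<in>L. k \<le> card (P - {x})}"
  define L2 where "L2 = L - L1"
  define f where "f = (\<lambda>P::'a set. P - {x})"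
  define D where "D = {Q\<in>L1. x \<in> Q \<and> Q - {x} \<in> L}"
  define D2 where "D2 = {A\<in>L. A \<subseteq> F \<and> insert x A \<in> L}"
  have L'sub: "f ` L1 \<subseteq> Pow F" using insert.prems(1) by (auto simp: f_def L1_def)
  have L'card: "\<forall>P\<in>f ` L1. k \<le> card P" by (auto simp: f_def L1_def)
  have L'lam: "\<forall>P\<in>f ` L1. \<forall>Q\<in>f ` L1. k \<le> card (P \<inter> Q) \<longrightarrow> P \<subseteq> Q \<or> Q \<subseteq> P"
  proof (intro ballI impI)
    fix P' Q' assume "P' \<in> f ` L1" "Q' \<in> f ` L1" and c: "k \<le> card (P' \<inter> Q')"
    then obtain P Q where PQ: "P \<in> L" "Q \<in> L" "P' = P - {x}" "Q' = Q - {x}"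
      by (auto simp: f_def L1_def)
    have "P' \<inter> Q' \<subseteq> P \<inter> Q" using PQ by auto
    hence "card (P' \<inter> Q') \<le> card (P \<inter> Q)" using finP[OF PQ(1)] by (intro card_mono) auto
    hence "P \<subseteq> Q \<or> Q \<subseteq> P" using c insert.prems(3) PQ by auto
    thus "P' \<subseteq> Q' \<or> Q' \<subseteq> P'" using PQ by auto
  qed
  have IH: "card (f ` L1) \<le> 2 * ?m ^ k" using insert.IH[OF L'sub L'card L'lam] .
  have inj: "inj_on f (L1 - D)"
  proof (rule inj_onI)
    fix P Q assume P: "P \<in> L1 - D" and Q: "Q \<in> L1 - D" and e: "f P = f Q"
    have eP: "x \<in> P \<Longrightarrow> P = insert x (f P)" by (auto simp: f_def)
    have eQ: "x \<in> Q \<Longrightarrow> Q = insert x (f Q)" by (auto simp: f_def)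
    have nP: "x \<notin> P \<Longrightarrow> P = f P" by (auto simp: f_def)
    have nQ: "x \<notin> Q \<Longrightarrow> Q = f Q" by (auto simp: f_def)
    show "P = Q"
    proof (cases "x \<in> P")
      case True
      show ?thesis
      proof (cases "x \<in> Q")
        case True
        then show ?thesis using eP eQ e \<open>x \<in> P\<close> by metis
      next
        case False
        then have "P - {x} \<in> L" using nQ e Q by (auto simp: f_def L1_def)
        then have "P \<in> D" using P True by (auto simp: D_def)
        then show ?thesis using P by blast
      qed
    next
      case False
      show ?thesis
      proof (cases "x \<in> Q")
        case True
        then have "Q - {x} \<in> L" using nP e P False by (auto simp: f_def L1_def)
        then have "Q \<in> D" using Q True by (auto simp: D_def)
        then show ?thesis using Q by blast
      next
        case False
        then show ?thesis using nP nQ e \<open>x \<notin> P\<close> by metis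
      qed
    qed
  qed
  have finD2: "finite D2" using finL by (auto simp: D2_def)
  have cardD: "card D \<le> card D2"
  proof -
    have "inj_on f D"
    proof (rule inj_onI)
      fix P Q assume "P \<in> D" "Q \<in> D" "f P = f Q"
      then have "x \<in> P" "x \<in> Q" "P - {x} = Q - {x}" by (auto simp: D_def f_def)
      then show "P = Q" by (metis insert_Diff)
    qed
    moreover have "f ` D \<subseteq> D2"
    proof
      fix A assume "A \<in> f ` D"
      then obtain Q where Q: "Q \<in> D" "A = Q - {x}" by (auto simp: f_def)
      then have "x \<in> Q" "Q \<in> L" "Q - {x} \<in> L" by (auto simp: D_def L1_def)
      moreover have "Q - {x} \<subseteq> F" using insert.prems(1) \<open>Q \<in> L\<close> by auto
      ultimately show "A \<in> D2" using Q(2) by (auto simp: D2_def insert_absorb)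
    qed
    ultimately show ?thesis using finD2 by (metis card_image card_mono)
  qed
  have cardD2: "card D2 \<le> ?m ^ (k-1)"
  proof -
    define g where "g = (\<lambda>A::'a set. SOME S. S \<subseteq> A \<and> card S = k - 1)"
    have finA: "finite A" if "A \<in> D2" for A
      using that insert.hyps(1) by (auto simp: D2_def intro: finite_subset)
    have g: "g A \<subseteq> A \<and> card (g A) = k-1" if "A \<in> D2" for A
    proof -
      have "k - 1 \<le> card A" using that insert.prems(2) by (auto simp: D2_def)
      then obtain S where "S \<subseteq> A" "card S = k-1" using obtain_subset_with_card_n by metis
      then have "\<exists>S. S \<subseteq> A \<and> card S = k-1" by blast
      then show ?thesis unfolding g_def by (rule someI_ex)
    qed
    have "inj_on g D2"
    proof (rule inj_onI)
      fix A B assume A: "A \<in> D2" and B: "B \<in> D2" and e: "g A = g B"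
      have "g A \<subseteq> A \<inter> B" using g[OF A] g[OF B] e by auto
      hence kAB: "k - 1 \<le> card (A \<inter> B)" using g[OF A] finA[OF A] card_mono
        by (metis finite_Int)
      have xA: "x \<notin> A" "x \<notin> B" using A B insert.hyps(2) by (auto simp: D2_def)
      have "insert x A \<inter> insert x B = insert x (A \<inter> B)" by auto
      hence "card (insert x A \<inter> insert x B) = Suc (card (A \<inter> B))"
        using xA finA[OF A] by simp
      hence "k \<le> card (insert x A \<inter> insert x B)" using kAB by simp
      moreover have iA: "insert x A \<in> L" "insert x B \<in> L" "A \<in> L" "B \<in> L"
        using A B by (auto simp: D2_def)
      ultimately have nest: "insert x A \<subseteq> insert x B \<or> insert x B \<subseteq> insert x A"
        using insert.prems(3) by blast
      show "A = B"
      proof (cases "insert x A \<subseteq> insert x B")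
        case True
        hence "A \<subseteq> B" using xA by blast
        hence "insert x A \<inter> B = A" using xA by blast
        hence "k \<le> card (insert x A \<inter> B)" using insert.prems(2) iA by auto
        hence "insert x A \<subseteq> B \<or> B \<subseteq> insert x A" using insert.prems(3) iA by blast
        thus ?thesis using xA \<open>A \<subseteq> B\<close> by blast
      next
        case False
        hence T: "insert x B \<subseteq> insert x A" using nest by blast
        hence "B \<subseteq> A" using xA by blast
        hence "insert x B \<inter> A = B" using xA by blast
        hence "k \<le> card (insert x B \<inter> A)" using insert.prems(2) iA by auto
        hence "insert x B \<subseteq> A \<or> A \<subseteq> insert x B" using insert.prems(3) iA by blast
        thus ?thesis using xA \<open>B \<subseteq> A\<close> by blast
      qed
    qed
    moreover have "g ` D2 \<subseteq> {S. S \<subseteq> F \<and> card S = k-1}" using g by (auto simp: D2_def)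
    moreover have "finite {S. S \<subseteq> F \<and> card S = k-1}" using insert.hyps(1) by auto
    ultimately have "card D2 \<le> card {S. S \<subseteq> F \<and> card S = k-1}"
      using card_inj_on_le by blast
    thus ?thesis using subsets_card_le[OF insert.hyps(1)] le_trans by blast
  qed
  have L2sub: "L2 \<subseteq> insert x ` {S. S \<subseteq> F \<and> card S = k-1}"
  proof
    fix P assume "P \<in> L2"
    then have P: "P \<in> L" "card (P - {x}) < k" by (auto simp: L2_def L1_def)
    have kP: "k \<le> card P" using insert.prems(2) P by auto
    have "x \<in> P"
    proof (rule ccontr)
      assume "x \<notin> P" then have "P - {x} = P" by simp
      with P kP show False by simp
    qed
    have "card (P - {x}) = card P - 1" using \<open>x\<in>P\<close> finP[OF P(1)] by simp
    hence c: "card (P - {x}) = k - 1" using P kP by simp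
    have "P - {x} \<subseteq> F" using insert.prems(1) P by auto
    moreover have "P = insert x (P - {x})" using \<open>x\<in>P\<close> by auto
    ultimately show "P \<in> insert x ` {S. S \<subseteq> F \<and> card S = k-1}" using c by blast
  qed
  have cardL2: "card L2 \<le> ?m^(k-1)"
  proof -
    have fS: "finite {S. S \<subseteq> F \<and> card S = k-1}" using insert.hyps(1) by auto
    have "card L2 \<le> card (insert x ` {S. S \<subseteq> F \<and> card S = k-1})"
      using L2sub fS by (intro card_mono) auto
    also have "\<dots> \<le> card {S. S \<subseteq> F \<and> card S = k-1}" using fS by (rule card_image_le)
    also have "\<dots> \<le> ?m^(k-1)" using subsets_card_le[OF insert.hyps(1)] .
    finally show ?thesis .
  qed
  have finL1: "finite L1" using finL by (auto simp: L1_def)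
  have "card L1 \<le> card ((L1 - D) \<union> D)" using finL1 by (intro card_mono) (auto simp: D_def)
  also have "\<dots> \<le> card (L1 - D) + card D" by (rule card_Un_le)
  also have "card (L1 - D) = card (f ` (L1 - D))" using inj by (simp add: card_image)
  also have "\<dots> \<le> card (f ` L1)" using finL1 by (intro card_mono) auto
  finally have cL1: "card L1 \<le> card (f ` L1) + card D" by simp
  have "card L \<le> card (L1 \<union> L2)" using finL by (intro card_mono) (auto simp: L2_def L1_def)
  also have "\<dots> \<le> card L1 + card L2" by (rule card_Un_le)
  finally have "card L \<le> 2 * ?m^k + ?m^(k-1) + ?m^(k-1)"
    using cL1 IH cardD cardD2 cardL2 by linarith
  also have "\<dots> \<le> 2 * (Suc ?m)^k" using pow_step[OF assms(2), of ?m] by linarith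
  finally show ?case using insert.hyps by simp
qed


lemma un_notin: "x \<in> A \<union> B \<Longrightarrow> x \<notin> A \<Longrightarrow> x \<in> B" by blast

lemma cl_mem:
  assumes AV: "A \<subseteq> vset n" and BV: "B \<subseteq> vset n" and orth: "r_orthogonal r n A B"
    and P: "P \<in> {A, vset n - A}" and Q: "Q \<in> {B, vset n - B}" and c: "r \<le> card (P \<inter> Q)"
  shows "P \<union> Q \<in> {X. X \<subseteq> vset n \<and> card X \<le> r} \<union> {X. X \<subseteq> vset n \<and> card (vset n - X) \<le> r}
     \<union> {A, vset n - A, B, vset n - B}" (is "_ \<in> ?E0")
proof -
  have "P \<union> Q \<in> cl r n {A,B}" unfolding cl_def
  proof (rule InterI)
    fix E assume "E \<in> {E \<in> K r n. {A,B} \<subseteq> E}"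
    then have E: "E \<in> K0 r n" "\<forall>A\<in>E. \<forall>B\<in>E. r \<le> card (A\<inter>B) \<longrightarrow> A \<union> B \<in> E" "A\<in>E" "B\<in>E"
      by (auto simp: K_def)
    from E(1) have "\<forall>A\<in>E. vset n - A \<in> E" by (auto simp: K0_def)
    hence "P \<in> E" "Q \<in> E" using P Q E(3,4) by auto
    thus "P \<union> Q \<in> E" using E(2) c by blast
  qed
  hence PQ: "P \<union> Q \<in> cl0 r n {A,B}" using orth by (simp add: r_orthogonal_def)
  have s1: "?E0 \<subseteq> Pow (vset n)" using AV BV by auto
  have s2: "\<forall>X. X \<subseteq> vset n \<and> card X \<le> r \<longrightarrow> X \<in> ?E0" by blast
  have s3: "\<forall>Y\<in>?E0. vset n - Y \<in> ?E0"
  proof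
    fix Y assume Y: "Y \<in> ?E0"
    then have YV: "Y \<subseteq> vset n" using s1 by blast
    have dd: "vset n - (vset n - Y) = Y" using YV by blast
    from Y consider "card Y \<le> r" | "card (vset n - Y) \<le> r" | "Y \<in> {A, vset n - A, B, vset n - B}"
      by blast
    then show "vset n - Y \<in> ?E0"
    proof cases
      case 1 then show ?thesis using dd by simp
    next
      case 2 then show ?thesis by blast
    next
      case 3 then show ?thesis using AV BV by (auto simp: double_diff)
    qed
  qed
  have "?E0 \<in> K0 r n" unfolding K0_def using s1 s2 s3 by blast
  moreover have "{A,B} \<subseteq> ?E0" by blast
  ultimately have "?E0 \<in> {E \<in> K0 r n. {A,B} \<subseteq> E}" by blast
  with PQ show ?thesis unfolding cl0_def by (rule InterD)
qed

lemma small_card: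
  assumes "finite V" "card V \<ge> 1"
  shows "card {X. X \<subseteq> V \<and> card X \<le> r} \<le> (r+1) * card V ^ r"
proof -
  have "{X. X \<subseteq> V \<and> card X \<le> r} = (\<Union>j\<in>{..r}. {X. X \<subseteq> V \<and> card X = j})" by auto
  hence "card {X. X \<subseteq> V \<and> card X \<le> r} \<le> (\<Sum>j\<in>{..r}. card {X. X \<subseteq> V \<and> card X = j})"
    using card_UN_le[of "{..r}" "\<lambda>j. {X. X \<subseteq> V \<and> card X = j}"] by simp
  also have "\<dots> \<le> (\<Sum>j\<in>{..r}. card V ^ r)"
  proof (rule sum_mono)
    fix j assume "j \<in> {..r}"
    then have "card V ^ j \<le> card V ^ r" using assms(2) by (intro power_increasing) auto
    thus "card {X. X \<subseteq> V \<and> card X = j} \<le> card V ^ r" using subsets_card_le[OF assms(1), of j] by linarith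
  qed
  also have "\<dots> = (r+1) * card V ^ r" by simp
  finally show ?thesis .
qed

theorem theorem2:
  fixes r :: nat
  shows "\<exists>C::real. C > 0 \<and>
    (\<forall>n::nat. \<forall>H::nat set set. n \<ge> 1 \<longrightarrow> H \<subseteq> Pow (vset n) \<longrightarrow> r_cross_free r n H \<longrightarrow>
       real (card H) \<le> C * real n ^ (r + 1))"
proof (intro exI[of _ "real (2*(r+1) + 4)"] conjI allI impI)
  show "real (2*(r+1) + 4) > 0" by simp
  fix n :: nat and H :: "nat set set"
  assume n1: "n \<ge> 1" and HV: "H \<subseteq> Pow (vset n)" and cf: "r_cross_free r n H"
  define V where "V = vset n"
  have finV: "finite V" and cV: "card V = n" by (auto simp: V_def vset_def)
  define S where "S = {X. X \<subseteq> V \<and> card X \<le> r}"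
  define G where "G = {P. P \<in> H \<union> (\<lambda>A. V - A) ` H \<and> r+1 \<le> card P \<and> 2 * card P \<le> n}"
  have cS: "card S \<le> (r+1) * n ^ r" unfolding S_def using small_card[OF finV] cV n1 by simp
  have GV: "G \<subseteq> Pow V" using HV by (auto simp: G_def V_def)
  have finP: "finite P" if "P \<subseteq> V" for P using finV that finite_subset by blast
  have lam: "\<forall>P\<in>G. \<forall>Q\<in>G. r+1 \<le> card (P \<inter> Q) \<longrightarrow> P \<subseteq> Q \<or> Q \<subseteq> P"
  proof (intro ballI impI)
    fix P Q assume PG: "P \<in> G" and QG: "Q \<in> G" and c: "r+1 \<le> card (P \<inter> Q)"
    obtain A where A: "A \<in> H" "P \<in> {A, V - A}" using PG by (auto simp: G_def)
    obtain B where B: "B \<in> H" "Q \<in> {B, V - B}" using QG by (auto simp: G_def)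
    have AV: "A \<subseteq> V" "B \<subseteq> V" using A B HV by (auto simp: V_def)
    have PV: "P \<subseteq> V" "Q \<subseteq> V" using PG QG GV by auto
    have orth: "r_orthogonal r n A B" using cf A B by (auto simp: r_cross_free_def)
    have mem: "P \<union> Q \<in> {X. X \<subseteq> V \<and> card X \<le> r} \<union> {X. X \<subseteq> V \<and> card (V - X) \<le> r}
     \<union> {A, V - A, B, V - B}"
      using cl_mem[OF AV[unfolded V_def] orth A(2)[unfolded V_def] B(2)[unfolded V_def]] c
      unfolding V_def by simp
    have cP: "r+1 \<le> card P" "2 * card P \<le> n" "r+1 \<le> card Q" "2 * card Q \<le> n"
      using PG QG by (auto simp: G_def)
    have fin: "finite P" "finite Q" using PV finP by auto
    have cu: "card (P \<union> Q) + card (P \<inter> Q) = card P + card Q" using card_Un_Int fin by metis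
    have "card P \<le> card (P \<union> Q)" using fin by (intro card_mono) auto
    hence ns: "\<not> card (P \<union> Q) \<le> r" using cP by linarith
    have "card (V - (P \<union> Q)) = n - card (P \<union> Q)" using PV cV fin by (simp add: card_Diff_subset)
    hence nc: "\<not> card (V - (P \<union> Q)) \<le> r" using cu cP c by linarith
    have eA: "{A, V - A} = {P, V - P}" using A AV by (auto simp: double_diff)
    have eB: "{B, V - B} = {Q, V - Q}" using B AV by (auto simp: double_diff)
    have "P \<union> Q \<notin> {X. X \<subseteq> V \<and> card X \<le> r} \<union> {X. X \<subseteq> V \<and> card (V - X) \<le> r}"
      using ns nc by simp
    hence m4: "P \<union> Q \<in> {A, V - A, B, V - B}" by (rule un_notin[OF mem])
    have "P \<union> Q \<in> {A, V - A} \<or> P \<union> Q \<in> {B, V - B}" using m4 by simp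
    hence "P \<union> Q \<in> {P, V - P} \<or> P \<union> Q \<in> {Q, V - Q}" by (simp only: eA eB)
    hence "P \<union> Q \<in> {P, V - P, Q, V - Q}" by simp
    moreover have "P \<noteq> {}" "Q \<noteq> {}" using cP by auto
    ultimately show "P \<subseteq> Q \<or> Q \<subseteq> P" by blast
  qed
  have Gc: "\<forall>P\<in>G. r+1 \<le> card P" by (simp add: G_def)
  have "card G \<le> 2 * card V ^ (r+1)" using klam[OF finV _ GV Gc lam] by simp
  hence cG: "card G \<le> 2 * n ^ (r+1)" using cV by simp
  have finS: "finite S" using finV by (auto simp: S_def)
  have finG: "finite G" using finV GV by (meson finite_Pow_iff finite_subset)
  have Hsub: "H \<subseteq> S \<union> (\<lambda>X. V - X) ` S \<union> G \<union> (\<lambda>X. V - X) ` G"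
  proof
    fix A assume AH: "A \<in> H"
    have AV: "A \<subseteq> V" using AH HV by (auto simp: V_def)
    have AA: "A = V - (V - A)" using AV by auto
    have cc: "card (V - A) = n - card A" "card A \<le> n"
      using card_Diff_subset[OF finite_subset[OF AV finV] AV] card_mono[OF finV AV] cV by auto
    consider "card A \<le> r" | "card (V - A) \<le> r" | "r+1 \<le> card A" "2 * card A \<le> n"
      | "r + 1 \<le> card (V - A)" "2 * card (V - A) \<le> n" using cc by linarith
    then show "A \<in> S \<union> (\<lambda>X. V - X) ` S \<union> G \<union> (\<lambda>X. V - X) ` G"
    proof cases
      case 1 then show ?thesis using AV by (auto simp: S_def)
    next
      case 2 then have "V - A \<in> S" by (auto simp: S_def)
      then show ?thesis using AA by blast
    next
      case 3 then show ?thesis using AH by (auto simp: G_def)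
    next
      case 4 then have "V - A \<in> G" using AH by (auto simp: G_def)
      then show ?thesis using AA by blast
    qed
  qed
  have "card H \<le> card (S \<union> (\<lambda>X. V - X) ` S \<union> G \<union> (\<lambda>X. V - X) ` G)"
    using finS finG by (intro card_mono[OF _ Hsub]) auto
  also have "\<dots> \<le> card S + card ((\<lambda>X. V - X) ` S) + card G + card ((\<lambda>X. V - X) ` G)"
  proof -
    let ?a = "S" and ?b = "(\<lambda>X. V - X) ` S" and ?c = G and ?d = "(\<lambda>X. V - X) ` G"
    have "card (?a \<union> ?b \<union> ?c \<union> ?d) \<le> card (?a \<union> ?b \<union> ?c) + card ?d" by (rule card_Un_le)
    moreover have "card (?a \<union> ?b \<union> ?c) \<le> card (?a \<union> ?b) + card ?c" by (rule card_Un_le)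
    moreover have "card (?a \<union> ?b) \<le> card ?a + card ?b" by (rule card_Un_le)
    ultimately show ?thesis by linarith
  qed
  also have "\<dots> \<le> card S + card S + card G + card G"
    using card_image_le[OF finS] card_image_le[OF finG] by (intro add_mono) auto
  also have "\<dots> \<le> 2*(r+1) * n^r + 4 * n^(r+1)" using cS cG by linarith
  also have "\<dots> \<le> 2*(r+1) * n^(r+1) + 4 * n^(r+1)"
    using n1 by (intro add_mono mult_le_mono2 power_increasing) auto
  also have "\<dots> = (2*(r+1) + 4) * n^(r+1)" by (simp add: add_mult_distrib)
  finally have "real (card H) \<le> real ((2*(r+1) + 4) * n^(r+1))" by (simp only: of_nat_le_iff)
  thus "real (card H) \<le> real (2*(r+1) + 4) * real n ^ (r + 1)" by simp
qed

end
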